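(* Let $\mathfrak g_0$ be a proper (continuous or sequential) contraction of the real $n$-dimensional Lie algebra $\mathfrak g$. Then $\mathrm{rank}_+\kappa_{\mathfrak g_0}\le\mathrm{rank}_+\kappa_{\mathfrak g}$ and $\mathrm{rank}_-\kappa_{\mathfrak g_0}\le\mathrm{rank}_-\kappa_{\mathfrak g}$. Moreover, for every $\alpha\in\mathbb R$, $\mathrm{rank}_+\tilde\kappa^\alpha_{\mathfrak g_0}\le\mathrm{rank}_+\tilde\kappa^\alpha_{\mathfrak g}$ and $\mathrm{rank}_-\tilde\kappa^\alpha_{\mathfrak g_0}\le\mathrm{rank}_-\tilde\kappa^\alpha_{\mathfrak g}$.
   Context: Let $V$ be an $n$-dimensional real vector space and $\mathfrak g=(V,[\cdot,\cdot])$ a Lie algebra. Continuous contraction: for a continuous map $U:(0,1]\to GL(V)$, $\varepsilon\mapsto U_\varepsilon$, put $[x,y]_\varepsilon=U_\varepsilon^{-1}[U_\varepsilon x,U_\varepsilon y]$; if $[x,y]_0:=\lim_{\varepsilon\to0^+}[x,y]_\varepsilon$ exists for all $x,y\in V$, the Lie algebra $\mathfrak g_0=(V,[\cdot,\cdot]_0)$ is called a (one-parametric continuous) contraction of $\mathfrak g$. Sequential contraction: the same with a sequence $U_p\in GL(V)$ and $p\to\infty$. A contraction is proper if $\mathfrak g_0\not\cong\mathfrak g$. The Killing form is $\kappa_{\mathfrak g}(u,v)=\mathrm{tr}(\mathrm{ad}_u\mathrm{ad}_v)$ and the modified Killing form is $\tilde\kappa^\alpha_{\mathfrak g}(u,v)=\mathrm{tr}(\mathrm{ad}_u\mathrm{ad}_v)+\alpha\,\mathrm{tr}(\mathrm{ad}_u)\mathrm{tr}(\mathrm{ad}_v)$.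 For a real symmetric bilinear form, $\mathrm{rank}_+$ (resp. $\mathrm{rank}_-$) is the number of positive (resp. negative) entries in a diagonal form (Sylvester inertia). *)

theory Defs
  imports "HOL-Analysis.Analysis"
begin

definition lie_bracket :: "(real^'n \<Rightarrow> real^'n \<Rightarrow> real^'n) \<Rightarrow> bool" where
  "lie_bracket b \<longleftrightarrow> bilinear b \<and> (\<forall>x. b x x = 0) \<and>
     (\<forall>x y z. b x (b y z) + b y (b z x) + b z (b x y) = 0)"

definition lie_isomorphic ::
  "(real^'n \<Rightarrow> real^'n \<Rightarrow> real^'n) \<Rightarrow> (real^'n \<Rightarrow> real^'n \<Rightarrow> real^'n) \<Rightarrow> bool" where
  "lie_isomorphic b c \<longleftrightarrow> (\<exists>f. linear f \<and> bij f \<and> (\<forall>x y. f (b x y) = c (f x) (f y)))"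

definition continuous_contraction ::
  "(real^'n \<Rightarrow> real^'n \<Rightarrow> real^'n) \<Rightarrow> (real^'n \<Rightarrow> real^'n \<Rightarrow> real^'n) \<Rightarrow> bool" where
  "continuous_contraction b b0 \<longleftrightarrow>
     (\<exists>U :: real \<Rightarrow> real^'n^'n. continuous_on {0<..1} U \<and>
        (\<forall>\<epsilon>\<in>{0<..1}. invertible (U \<epsilon>)) \<and>
        (\<forall>x y. ((\<lambda>\<epsilon>. matrix_inv (U \<epsilon>) *v b (U \<epsilon> *v x) (U \<epsilon> *v y)) \<longlongrightarrow> b0 x y) (at_right 0)))"

definition sequential_contraction ::
  "(real^'n \<Rightarrow> real^'n \<Rightarrow> real^'n) \<Rightarrow> (real^'n \<Rightarrow> real^'n \<Rightarrow> real^'n) \<Rightarrow> bool" where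
  "sequential_contraction b b0 \<longleftrightarrow>
     (\<exists>U :: nat \<Rightarrow> real^'n^'n. (\<forall>p. invertible (U p)) \<and>
        (\<forall>x y. (\<lambda>p. matrix_inv (U p) *v b (U p *v x) (U p *v y)) \<longlonglongrightarrow> b0 x y))"

definition ad :: "(real^'n \<Rightarrow> real^'n \<Rightarrow> real^'n) \<Rightarrow> real^'n \<Rightarrow> real^'n^'n" where
  "ad b u = matrix (b u)"

definition killing :: "(real^'n \<Rightarrow> real^'n \<Rightarrow> real^'n) \<Rightarrow> real^'n \<Rightarrow> real^'n \<Rightarrow> real" where
  "killing b u v = trace (ad b u ** ad b v)"

definition mod_killing ::
  "real \<Rightarrow> (real^'n \<Rightarrow> real^'n \<Rightarrow> real^'n) \<Rightarrow> real^'n \<Rightarrow> real^'n \<Rightarrow> real" where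
  "mod_killing \<alpha> b u v = trace (ad b u ** ad b v) + \<alpha> * trace (ad b u) * trace (ad b v)"

text \<open>Well defined by Sylvester's law of inertia.\<close>
definition diag_basis :: "(real^'n \<Rightarrow> real^'n \<Rightarrow> real) \<Rightarrow> real^'n^'n \<Rightarrow> bool" where
  "diag_basis B P \<longleftrightarrow> invertible P \<and>
     (\<forall>i j. i \<noteq> j \<longrightarrow> B (column i P) (column j P) = 0)"

definition rank_plus :: "(real^'n \<Rightarrow> real^'n \<Rightarrow> real) \<Rightarrow> nat" where
  "rank_plus B = (THE k. \<exists>P. diag_basis B P \<and> k = card {i. B (column i P) (column i P) > 0})"

definition rank_minus :: "(real^'n \<Rightarrow> real^'n \<Rightarrow> real) \<Rightarrow> nat" where
  "rank_minus B = (THE k. \<exists>P. diag_basis B P \<and> k = card {i. B (column i P) (column i P) < 0})"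

end

theory Submission
  imports Defs
begin

lemma diag_expand:
  fixes B :: "real^'n \<Rightarrow> real^'n \<Rightarrow> real"
  assumes bl: "bilinear B" and d: "diag_basis B P"
  shows "B (P *v x) (P *v x) = (\<Sum>i\<in>UNIV. (x$i)^2 * B (column i P) (column i P))"
proof -
  have e: "P *v x = (\<Sum>i\<in>UNIV. (x$i) *\<^sub>R column i P)"
    by (simp add: matrix_mult_sum scalar_mult_eq_scaleR)
  have "B (P *v x) (P *v x) = (\<Sum>(i,j)\<in>UNIV\<times>UNIV. B ((x$i) *\<^sub>R column i P) ((x$j) *\<^sub>R column j P))"
    unfolding e by (rule bilinear_sum[OF bl])
  also have "\<dots> = (\<Sum>i\<in>UNIV. \<Sum>j\<in>UNIV. B ((x$i) *\<^sub>R column i P) ((x$j) *\<^sub>R column j P))"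
    by (simp add: sum.cartesian_product)
  also have "\<dots> = (\<Sum>i\<in>UNIV. \<Sum>j\<in>UNIV. if j = i then (x$i)^2 * B (column i P) (column i P) else 0)"
    apply (rule sum.cong, simp, rule sum.cong, simp)
    using d bl by (auto simp: diag_basis_def bilinear_lmul bilinear_rmul power2_eq_square)
  also have "\<dots> = (\<Sum>i\<in>UNIV. (x$i)^2 * B (column i P) (column i P))"
    by simp
  finally show ?thesis .
qed

lemma coord_sub:
  fixes P :: "real^'n^'n"
  assumes "invertible P"
  shows "subspace ((\<lambda>x. P *v x) ` {x. \<forall>i. i \<notin> I \<longrightarrow> x$i = 0})"
    and "dim ((\<lambda>x. P *v x) ` {x. \<forall>i. i \<notin> I \<longrightarrow> x$i = 0}) = card I"
proof -
  have sub: "subspace {x::real^'n. \<forall>i. i \<notin> I \<longrightarrow> x$i = 0}"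
    by (auto simp: subspace_def)
  show "subspace ((\<lambda>x. P *v x) ` {x. \<forall>i. i \<notin> I \<longrightarrow> x$i = 0})"
    by (rule linear_subspace_image[OF _ sub]) simp
  have inj: "inj ((*v) P)" using inj_matrix_vector_mult[OF assms] .
  have "dim ((\<lambda>x. P *v x) ` {x. \<forall>i. i \<notin> I \<longrightarrow> x$i = 0}) = dim {x::real^'n. \<forall>i. i \<notin> I \<longrightarrow> x$i = 0}"
    by (rule dim_image_eq) (use inj in \<open>auto simp: inj_on_def\<close>)
  also have "\<dots> = card I" using dim_substandard_cart[of I, where 'a=real] by (simp add: dim_vec_eq)
  finally show "dim ((\<lambda>x. P *v x) ` {x. \<forall>i. i \<notin> I \<longrightarrow> x$i = 0}) = card I" .
qed

lemma dim_bound: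
  fixes B :: "real^'n \<Rightarrow> real^'n \<Rightarrow> real"
  assumes "subspace W" "subspace N" "\<forall>v\<in>W. v \<noteq> 0 \<longrightarrow> B v v > 0" "\<forall>v\<in>N. B v v \<le> 0"
  shows "dim W + dim N \<le> CARD('n)"
proof -
  have "W \<inter> N \<subseteq> {0}"
  proof
    fix v assume v: "v \<in> W \<inter> N"
    then have le: "B v v \<le> 0" using assms(4) by blast
    show "v \<in> {0}"
    proof (rule ccontr)
      assume "v \<notin> {0}"
      then have "B v v > 0" using assms(3) v by auto
      then show False using le by linarith
    qed
  qed
  hence "dim (W \<inter> N) = 0"
    by (simp add: dim_eq_0)
  moreover have "dim {x + y |x y. x \<in> W \<and> y \<in> N} \<le> CARD('n)"
    using dim_subset_UNIV[of "{x + y |x y. x \<in> W \<and> y \<in> N}"] by simp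
  ultimately show ?thesis using dim_sums_Int[OF assms(1,2)] by linarith
qed

lemma pos_le_card:
  fixes B :: "real^'n \<Rightarrow> real^'n \<Rightarrow> real"
  assumes bl: "bilinear B" and d: "diag_basis B P"
    and W: "subspace W" "\<forall>v\<in>W. v \<noteq> 0 \<longrightarrow> B v v > 0"
  shows "dim W \<le> card {i. B (column i P) (column i P) > 0}"
proof -
  let ?I = "{i. B (column i P) (column i P) > 0}"
  let ?N = "(\<lambda>x. P *v x) ` {x. \<forall>i. i \<notin> -?I \<longrightarrow> x$i = 0}"
  have inv: "invertible P" using d by (simp add: diag_basis_def)
  have "\<forall>v\<in>?N. B v v \<le> 0"
  proof
    fix v assume "v \<in> ?N"
    then obtain x where x: "v = P *v x" "\<forall>i. i \<in> ?I \<longrightarrow> x$i = 0" by auto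
    have "B v v = (\<Sum>i\<in>UNIV. (x$i)^2 * B (column i P) (column i P))"
      using diag_expand[OF bl d] x by simp
    also have "\<dots> \<le> 0"
    proof (rule sum_nonpos)
      fix i show "(x$i)^2 * B (column i P) (column i P) \<le> 0"
        using x(2)[rule_format, of i] by (cases "i \<in> ?I") (auto intro: mult_nonneg_nonpos)
    qed
    finally show "B v v \<le> 0" .
  qed
  from dim_bound[of W _ B, OF W(1) coord_sub(1)[OF inv, of "-?I"] W(2) this]
  have "dim W + card (- ?I) \<le> CARD('n)" using coord_sub(2)[OF inv, of "-?I"] by argo
  moreover have "card (- ?I) = CARD('n) - card ?I"
    using card_Diff_subset[of ?I UNIV] by (simp add: Compl_eq_Diff_UNIV)
  moreover have "card ?I \<le> CARD('n)" by (simp add: card_mono)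
  ultimately show ?thesis by linarith
qed

lemma pos_sub_exists:
  fixes B :: "real^'n \<Rightarrow> real^'n \<Rightarrow> real"
  assumes bl: "bilinear B" and d: "diag_basis B P"
  shows "\<exists>W. subspace W \<and> dim W = card {i. B (column i P) (column i P) > 0} \<and> (\<forall>v\<in>W. v \<noteq> 0 \<longrightarrow> B v v > 0)"
proof -
  let ?I = "{i. B (column i P) (column i P) > 0}"
  let ?W = "(\<lambda>x. P *v x) ` {x. \<forall>i. i \<notin> ?I \<longrightarrow> x$i = 0}"
  have inv: "invertible P" using d by (simp add: diag_basis_def)
  have "\<forall>v\<in>?W. v \<noteq> 0 \<longrightarrow> B v v > 0"
  proof (intro ballI impI)
    fix v assume "v \<in> ?W" "v \<noteq> 0"
    then obtain x where x: "v = P *v x" "\<forall>i. i \<notin> ?I \<longrightarrow> x$i = 0" by auto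
    have "x \<noteq> 0" using x \<open>v \<noteq> 0\<close> by auto
    then obtain k where k: "x$k \<noteq> 0" using vec_eq_iff[of x 0] by auto
    hence kI: "k \<in> ?I" using x(2) by blast
    have "B v v = (\<Sum>i\<in>UNIV. (x$i)^2 * B (column i P) (column i P))"
      using diag_expand[OF bl d] x by simp
    also have "\<dots> > 0"
    proof (rule sum_pos2[where i=k])
      show "0 < (x$k)^2 * B (column k P) (column k P)" using k kI by simp
      show "\<And>i. i \<in> UNIV \<Longrightarrow> 0 \<le> (x$i)^2 * B (column i P) (column i P)"
      proof -
        fix i show "0 \<le> (x$i)^2 * B (column i P) (column i P)"
          using x(2)[rule_format, of i] by (cases "i \<in> ?I") auto
      qed
    qed auto
    finally show "B v v > 0" .
  qed
  thus ?thesis using coord_sub[OF inv, of ?I] by blast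
qed

lemma rank_plus_eq:
  fixes B :: "real^'n \<Rightarrow> real^'n \<Rightarrow> real"
  assumes bl: "bilinear B" and d: "diag_basis B P"
  shows "rank_plus B = card {i. B (column i P) (column i P) > 0}"
  unfolding rank_plus_def
proof (rule the_equality)
  show "\<exists>Q. diag_basis B Q \<and> card {i. B (column i P) (column i P) > 0} = card {i. B (column i Q) (column i Q) > 0}"
    using d by blast
  fix k assume "\<exists>Q. diag_basis B Q \<and> k = card {i. B (column i Q) (column i Q) > 0}"
  then obtain Q where Q: "diag_basis B Q" "k = card {i. B (column i Q) (column i Q) > 0}" by blast
  obtain W1 where W1: "subspace W1" "dim W1 = card {i. B (column i P) (column i P) > 0}" "\<forall>v\<in>W1. v \<noteq> 0 \<longrightarrow> B v v > 0"
    using pos_sub_exists[OF bl d] by blast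
  obtain W2 where W2: "subspace W2" "dim W2 = card {i. B (column i Q) (column i Q) > 0}" "\<forall>v\<in>W2. v \<noteq> 0 \<longrightarrow> B v v > 0"
    using pos_sub_exists[OF bl Q(1)] by blast
  show "k = card {i. B (column i P) (column i P) > 0}"
    using pos_le_card[OF bl d W2(1,3)] pos_le_card[OF bl Q(1) W1(1,3)] W1(2) W2(2) Q(2) by linarith
qed

lemma orth_basis:
  fixes B :: "real^'n \<Rightarrow> real^'n \<Rightarrow> real"
  assumes bl: "bilinear B" and sym: "\<forall>x y. B x y = B y x"
  shows "subspace S \<Longrightarrow> \<exists>T. T \<subseteq> S \<and> independent T \<and> S \<subseteq> span T \<and> (\<forall>u\<in>T. \<forall>w\<in>T. u \<noteq> w \<longrightarrow> B u w = 0)"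
proof (induction "dim S" arbitrary: S rule: less_induct)
  case less
  show ?case
  proof (cases "\<forall>v\<in>S. B v v = 0")
    case True
    have z: "\<forall>u\<in>S. \<forall>w\<in>S. B u w = 0"
    proof (intro ballI)
      fix u w assume uw: "u \<in> S" "w \<in> S"
      then have "u + w \<in> S" using less.prems subspace_add by blast
      have "B (u+w) (u+w) = B u u + B u w + B w u + B w w"
        by (simp add: bilinear_ladd bilinear_radd bl)
      moreover have "B (u+w) (u+w) = 0" using True \<open>u + w \<in> S\<close> by blast
      moreover have "B u u = 0" using True uw(1) by blast
      moreover have "B w w = 0" using True uw(2) by blast
      moreover have "B w u = B u w" using sym[rule_format, of w u] .
      ultimately show "B u w = 0" by simp
    qed
    obtain T where T: "T \<subseteq> S" "independent T" "S \<subseteq> span T" "card T = dim S"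
      by (rule basis_exists[of S])
    have "\<forall>u\<in>T. \<forall>w\<in>T. u \<noteq> w \<longrightarrow> B u w = 0"
      using z T(1) by blast
    with T show ?thesis by blast
  next
    case False
    then obtain v where v: "v \<in> S" "B v v \<noteq> 0" by auto
    define S' where "S' = {w\<in>S. B v w = 0}"
    have sub': "subspace S'"
      unfolding subspace_def
    proof (intro conjI ballI allI)
      show "0 \<in> S'" using less.prems bl unfolding S'_def by (simp add: subspace_0 bilinear_rzero)
      fix x y assume "x \<in> S'" "y \<in> S'"
      then show "x + y \<in> S'" using less.prems bl unfolding S'_def by (simp add: subspace_add bilinear_radd)
    next
      fix c x assume "x \<in> S'"
      then show "c *\<^sub>R x \<in> S'" using less.prems bl unfolding S'_def by (simp add: subspace_scale bilinear_rmul)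
    qed
    have vS': "v \<notin> S'" using v unfolding S'_def by auto
    have e1: "span S' = S'" using sub' by simp
    have e2: "span S = S" using less.prems by simp
    have "S' \<subseteq> S" unfolding S'_def by blast
    hence "S' \<subset> S" using vS' v(1) by blast
    hence "span S' \<subset> span S" unfolding e1 e2 .
    hence "dim S' < dim S" by (rule dim_psubset)
    from less.hyps[OF this sub'] obtain T' where T':
      "T' \<subseteq> S'" "independent T'" "S' \<subseteq> span T'" "\<forall>u\<in>T'. \<forall>w\<in>T'. u \<noteq> w \<longrightarrow> B u w = 0"
      by blast
    have spT': "span T' = S'"
    proof
      show "span T' \<subseteq> S'" using span_mono[OF T'(1)] e1 by simp
      show "S' \<subseteq> span T'" by (rule T'(3))
    qed
    let ?T = "insert v T'"
    have "?T \<subseteq> S" using T'(1) v unfolding S'_def by auto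
    moreover have "independent ?T"
      using independent_insertI[of v T'] spT' vS' T'(2) by auto
    moreover have "S \<subseteq> span ?T"
    proof
      fix w assume w: "w \<in> S"
      define c where "c = B v w / B v v"
      have "w - c *\<^sub>R v \<in> S" using w v less.prems by (simp add: subspace_diff subspace_scale)
      moreover have "B v (w - c *\<^sub>R v) = 0"
        using v(2) by (simp add: c_def bilinear_rsub bilinear_rmul bl)
      ultimately have "w - c *\<^sub>R v \<in> span T'" using spT' unfolding S'_def by auto
      hence "w - c *\<^sub>R v \<in> span ?T" by (meson span_mono subset_insertI subsetD)
      moreover have "c *\<^sub>R v \<in> span ?T" by (simp add: span_base span_mul)
      ultimately have "(w - c *\<^sub>R v) + c *\<^sub>R v \<in> span ?T" by (rule span_add)
      thus "w \<in> span ?T" by simp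
    qed
    moreover have "\<forall>u\<in>?T. \<forall>w\<in>?T. u \<noteq> w \<longrightarrow> B u w = 0"
    proof -
      have a: "\<forall>t\<in>T'. B v t = 0" using T'(1) unfolding S'_def by auto
      have b: "\<forall>t\<in>T'. B t v = 0"
      proof
        fix t assume "t \<in> T'" thus "B t v = 0" using a sym[rule_format, of t v] by simp
      qed
      show ?thesis
      proof (intro ballI impI)
        fix u w assume "u \<in> ?T" "w \<in> ?T" "u \<noteq> w"
        thus "B u w = 0" using a b T'(4) by blast
      qed
    qed
    ultimately show ?thesis by blast
  qed
qed

lemma diag_exists:
  fixes B :: "real^'n \<Rightarrow> real^'n \<Rightarrow> real"
  assumes bl: "bilinear B" and sym: "\<forall>x y. B x y = B y x"
  shows "\<exists>P. diag_basis B P"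
proof -
  obtain T where T: "independent T" "UNIV \<subseteq> span T" "\<forall>u\<in>T. \<forall>w\<in>T. u \<noteq> w \<longrightarrow> B u w = 0"
    using orth_basis[OF bl sym subspace_UNIV] by blast
  have fin: "finite T" using T(1) by (rule finiteI_independent)
  have "card T = dim (UNIV :: (real^'n) set)"
    using basis_card_eq_dim[of T UNIV] T by auto
  hence cT: "card T = CARD('n)" by simp
  obtain g where g: "bij_betw g (UNIV::'n set) T"
    using finite_same_card_bij[of "UNIV::'n set" T] fin cT by auto
  define P :: "real^'n^'n" where "P = (\<chi> i j. g j $ i)"
  have col: "column j P = g j" for j by (simp add: P_def column_def vec_eq_iff)
  have gT: "g j \<in> T" for j using g by (auto simp: bij_betw_def)
  have ginj: "inj g" using g by (auto simp: bij_betw_def)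
  have "\<forall>x. P *v x = 0 \<longrightarrow> x = 0"
  proof (intro allI impI)
    fix x :: "real^'n" assume x: "P *v x = 0"
    define u where "u t = x $ (inv_into UNIV g t)" for t
    have "P *v x = (\<Sum>i\<in>UNIV. (x$i) *\<^sub>R g i)"
      by (simp add: matrix_mult_sum scalar_mult_eq_scaleR col)
    also have "\<dots> = (\<Sum>i\<in>UNIV. u (g i) *\<^sub>R g i)"
      using ginj by (simp add: u_def)
    also have "\<dots> = (\<Sum>t\<in>T. u t *\<^sub>R t)"
      by (rule sum.reindex_bij_betw[OF g, of "\<lambda>t. u t *\<^sub>R t"])
    finally have "(\<Sum>t\<in>T. u t *\<^sub>R t) = 0" using x by simp
    hence "\<forall>t\<in>T. u t = 0" using T(1) dependent_finite[OF fin] by blast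
    hence "x $ i = 0" for i using gT[of i] ginj by (metis u_def inv_into_f_f UNIV_I)
    thus "x = 0" by (simp add: vec_eq_iff)
  qed
  hence "invertible P"
    using matrix_left_invertible_ker[of P] invertible_left_inverse[of P] by blast
  moreover have "\<forall>i j. i \<noteq> j \<longrightarrow> B (column i P) (column j P) = 0"
    using T(3) gT ginj by (auto simp: col inj_eq)
  ultimately show ?thesis unfolding diag_basis_def by blast
qed


lemma bilinear_expand:
  fixes D :: "real^'n \<Rightarrow> real^'n \<Rightarrow> real"
  assumes bl: "bilinear D"
  shows "D v w = (\<Sum>i\<in>UNIV. \<Sum>j\<in>UNIV. v$i * w$j * D (axis i 1) (axis j 1))"
proof -
  have ev: "v = (\<Sum>i\<in>UNIV. (v$i) *\<^sub>R axis i 1)" for v :: "real^'n"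
    using basis_expansion[of v] by (simp add: scalar_mult_eq_scaleR)
  have "D v w = D (\<Sum>i\<in>UNIV. (v$i) *\<^sub>R axis i 1) (\<Sum>j\<in>UNIV. (w$j) *\<^sub>R axis j 1)"
    using ev[of v] ev[of w] by simp
  also have "\<dots> = (\<Sum>(i,j)\<in>UNIV\<times>UNIV. D ((v$i) *\<^sub>R axis i 1) ((w$j) *\<^sub>R axis j 1))"
    by (rule bilinear_sum[OF bl])
  also have "\<dots> = (\<Sum>i\<in>UNIV. \<Sum>j\<in>UNIV. D ((v$i) *\<^sub>R axis i 1) ((w$j) *\<^sub>R axis j 1))"
    by (simp add: sum.cartesian_product)
  also have "\<dots> = (\<Sum>i\<in>UNIV. \<Sum>j\<in>UNIV. v$i * w$j * D (axis i 1) (axis j 1))"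
    by (simp add: bilinear_lmul[OF bl] bilinear_rmul[OF bl] mult_ac)
  finally show ?thesis .
qed

lemma posdef_lower:
  fixes B0 :: "real^'n \<Rightarrow> real^'n \<Rightarrow> real"
  assumes bl: "bilinear B0" and W: "subspace W" and pd: "\<forall>v\<in>W. v \<noteq> 0 \<longrightarrow> B0 v v > 0"
  shows "\<exists>c>0. \<forall>v\<in>W. B0 v v \<ge> c * (norm v)^2"
proof (cases "W \<subseteq> {0}")
  case True
  have "\<forall>v\<in>W. B0 v v \<ge> 1 * (norm v)^2"
    using True bilinear_lzero[OF bl] by auto
  thus ?thesis by (intro exI[of _ 1]) auto
next
  case False
  then obtain w where w: "w \<in> W" "w \<noteq> 0" by auto
  let ?K = "W \<inter> sphere 0 1"
  have cK: "compact ?K"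
    by (rule closed_Int_compact[OF closed_subspace[OF W] compact_sphere])
  have "w /\<^sub>R norm w \<in> ?K" using w W by (simp add: subspace_scale)
  hence neK: "?K \<noteq> {}" by blast
  have contf: "continuous_on ?K (\<lambda>v. B0 v v)"
  proof -
    have e: "(\<lambda>v. B0 v v) = (\<lambda>v. \<Sum>i\<in>UNIV. \<Sum>j\<in>UNIV. v$i * v$j * B0 (axis i 1) (axis j 1))"
      by (intro ext bilinear_expand[OF bl])
    show ?thesis unfolding e by (intro continuous_intros)
  qed
  obtain x0 where x0: "x0 \<in> ?K" "\<forall>y\<in>?K. B0 x0 x0 \<le> B0 y y"
    using continuous_attains_inf[OF cK neK contf] by blast
  have c0: "B0 x0 x0 > 0" using x0(1) pd by auto
  have "\<forall>v\<in>W. B0 v v \<ge> B0 x0 x0 * (norm v)^2"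
  proof
    fix v assume v: "v \<in> W"
    show "B0 v v \<ge> B0 x0 x0 * (norm v)^2"
    proof (cases "v = 0")
      case True thus ?thesis using bilinear_lzero[OF bl] by simp
    next
      case False
      define u where "u = v /\<^sub>R norm v"
      have uK: "u \<in> ?K" using v W False by (simp add: subspace_scale u_def)
      have eq: "norm v *\<^sub>R u = v" using False by (simp add: u_def)
      have "B0 (norm v *\<^sub>R u) (norm v *\<^sub>R u) = (norm v)^2 * B0 u u"
        by (simp add: bilinear_lmul[OF bl] bilinear_rmul[OF bl] power2_eq_square)
      hence "B0 v v = (norm v)^2 * B0 u u" unfolding eq .
      moreover have "B0 x0 x0 \<le> B0 u u" using x0(2) uK by blast
      ultimately show ?thesis by (metis mult.commute mult_left_mono zero_le_power2)
    qed
  qed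
  thus ?thesis using c0 by blast
qed

lemma sum_bound:
  fixes v :: "real^'n"
  shows "\<bar>\<Sum>i\<in>UNIV. \<Sum>j\<in>UNIV. v$i * v$j * d i j\<bar> \<le> (norm v)^2 * (\<Sum>i\<in>UNIV. \<Sum>j\<in>UNIV. \<bar>d i j\<bar>)"
proof -
  have "\<bar>\<Sum>i\<in>UNIV. \<Sum>j\<in>UNIV. v$i * v$j * d i j\<bar> \<le> (\<Sum>i\<in>UNIV. \<bar>\<Sum>j\<in>UNIV. v$i * v$j * d i j\<bar>)"
    by (rule sum_abs)
  also have "\<dots> \<le> (\<Sum>i\<in>UNIV. \<Sum>j\<in>UNIV. \<bar>v$i * v$j * d i j\<bar>)"
    by (intro sum_mono sum_abs)
  also have "\<dots> \<le> (\<Sum>i\<in>UNIV. \<Sum>j\<in>UNIV. (norm v)^2 * \<bar>d i j\<bar>)"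
  proof (intro sum_mono)
    fix i j
    have "\<bar>v$i\<bar> * \<bar>v$j\<bar> \<le> norm v * norm v"
      by (intro mult_mono component_le_norm_cart) auto
    thus "\<bar>v$i * v$j * d i j\<bar> \<le> (norm v)^2 * \<bar>d i j\<bar>"
      by (simp add: abs_mult power2_eq_square mult_right_mono)
  qed
  also have "\<dots> = (norm v)^2 * (\<Sum>i\<in>UNIV. \<Sum>j\<in>UNIV. \<bar>d i j\<bar>)"
    by (simp add: sum_distrib_left)
  finally show ?thesis .
qed

lemma eventually_posdef:
  fixes B0 :: "real^'n \<Rightarrow> real^'n \<Rightarrow> real"
  assumes bl: "bilinear B0" and lim: "\<forall>x y. ((\<lambda>t. C t x y) \<longlongrightarrow> B0 x y) F"
    and evb: "eventually (\<lambda>t. bilinear (C t)) F"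
    and W: "subspace W" and pd: "\<forall>v\<in>W. v \<noteq> 0 \<longrightarrow> B0 v v > 0"
  shows "eventually (\<lambda>t. \<forall>v\<in>W. v \<noteq> 0 \<longrightarrow> C t v v > 0) F"
proof -
  obtain c where c: "c > 0" "\<forall>v\<in>W. B0 v v \<ge> c * (norm v)^2"
    using posdef_lower[OF bl W pd] by blast
  define S where "S t = (\<Sum>i\<in>UNIV. \<Sum>j\<in>UNIV. \<bar>C t (axis i 1) (axis j 1) - B0 (axis i 1) (axis j 1)\<bar>)" for t
  have "(S \<longlongrightarrow> (\<Sum>i\<in>(UNIV::'n set). \<Sum>j\<in>(UNIV::'n set). \<bar>B0 (axis i 1) (axis j 1) - B0 (axis i 1) (axis j 1)\<bar>)) F"
    unfolding S_def using lim by (intro tendsto_intros) auto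
  hence "(S \<longlongrightarrow> 0) F" by simp
  hence evS: "eventually (\<lambda>t. S t < c) F" using c(1) by (rule order_tendstoD(2))
  show ?thesis
    using evS evb
  proof eventually_elim
    case (elim t)
    show ?case
    proof (intro ballI impI)
      fix v assume v: "v \<in> W" "v \<noteq> 0"
      have "C t v v - B0 v v = (\<Sum>i\<in>UNIV. \<Sum>j\<in>UNIV. v$i * v$j * (C t (axis i 1) (axis j 1) - B0 (axis i 1) (axis j 1)))"
        unfolding bilinear_expand[OF elim(2), of v v] bilinear_expand[OF bl, of v v]
        by (simp add: sum_subtractf[symmetric] right_diff_distrib)
      hence "\<bar>C t v v - B0 v v\<bar> \<le> (norm v)^2 * S t"
        using sum_bound[of v] unfolding S_def by simp
      moreover have "B0 v v \<ge> c * (norm v)^2" using c(2) v(1) by blast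
      moreover have "(norm v)^2 > 0" using v(2) by simp
      moreover have "(norm v)^2 * S t < (norm v)^2 * c"
        using elim(1) \<open>(norm v)^2 > 0\<close> by simp
      ultimately show "C t v v > 0" by (smt (verit) mult.commute)
    qed
  qed
qed


lemma bilinear_comp:
  fixes B :: "real^'n \<Rightarrow> real^'n \<Rightarrow> real"
  assumes bl: "bilinear B" and f: "linear f"
  shows "bilinear (\<lambda>x y. B (f x) (f y))"
proof -
  have l1: "linear (\<lambda>y. B x y)" for x using bl by (simp add: bilinear_def)
  have l2: "linear (\<lambda>y. B y x)" for x using bl by (simp add: bilinear_def)
  show ?thesis unfolding bilinear_def
    using linear_compose[OF f l1] linear_compose[OF f l2] by (simp add: o_def)
qed

lemma bilinear_neg:
  fixes B :: "real^'n \<Rightarrow> real^'n \<Rightarrow> real"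
  assumes bl: "bilinear B"
  shows "bilinear (\<lambda>x y. - B x y)"
  unfolding bilinear_def linear_iff
  by (simp add: bilinear_ladd[OF bl] bilinear_radd[OF bl] bilinear_lmul[OF bl] bilinear_rmul[OF bl])

lemma limit_bilinear:
  fixes B0 :: "real^'n \<Rightarrow> real^'n \<Rightarrow> real"
  assumes F: "F \<noteq> bot" and lim: "\<forall>x y. ((\<lambda>t. C t x y) \<longlongrightarrow> B0 x y) F"
    and ev: "eventually (\<lambda>t. bilinear (C t) \<and> (\<forall>x y. C t x y = C t y x)) F"
  shows "bilinear B0 \<and> (\<forall>x y. B0 x y = B0 y x)"
proof -
  have L: "\<And>x y. ((\<lambda>t. C t x y) \<longlongrightarrow> B0 x y) F" using lim by blast
  have uq: "a = b" if "((\<lambda>t. C t x y) \<longlongrightarrow> a) F" "eventually (\<lambda>t. C t x y = g t) F" "(g \<longlongrightarrow> b) F" for a b x y g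
  proof -
    have "(g \<longlongrightarrow> a) F" using that(1) tendsto_cong[OF that(2)] by simp
    thus ?thesis using tendsto_unique[OF F _ that(3)] by blast
  qed
  have a1: "B0 (x + y) z = B0 x z + B0 y z" for x y z
    by (rule uq[OF L _ tendsto_add[OF L L]]) (rule eventually_mono[OF ev], elim conjE, erule bilinear_ladd)
  have a2: "B0 x (y + z) = B0 x y + B0 x z" for x y z
    by (rule uq[OF L _ tendsto_add[OF L L]]) (rule eventually_mono[OF ev], elim conjE, erule bilinear_radd)
  have m1: "B0 (c *\<^sub>R x) z = c *\<^sub>R B0 x z" for c x z
    by (rule uq[OF L _ tendsto_scaleR[OF tendsto_const L]]) (rule eventually_mono[OF ev], elim conjE, erule bilinear_lmul)
  have m2: "B0 x (c *\<^sub>R z) = c *\<^sub>R B0 x z" for c x z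
    by (rule uq[OF L _ tendsto_scaleR[OF tendsto_const L]]) (rule eventually_mono[OF ev], elim conjE, erule bilinear_rmul)
  have s: "B0 x y = B0 y x" for x y
    by (rule uq[OF L _ L]) (rule eventually_mono[OF ev], blast)
  show ?thesis unfolding bilinear_def linear_iff using a1 a2 m1 m2 s by simp
qed

lemma rank_plus_limit:
  fixes B B0 :: "real^'n \<Rightarrow> real^'n \<Rightarrow> real"
  assumes F: "F \<noteq> bot" and bl: "bilinear B" and sym: "\<forall>x y. B x y = B y x"
    and lim: "\<forall>x y. ((\<lambda>t. C t x y) \<longlongrightarrow> B0 x y) F"
    and ev: "eventually (\<lambda>t. \<exists>f. linear f \<and> inj f \<and> (\<forall>x y. C t x y = B (f x) (f y))) F"
  shows "rank_plus B0 \<le> rank_plus B"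
proof -
  have evb: "eventually (\<lambda>t. bilinear (C t) \<and> (\<forall>x y. C t x y = C t y x)) F"
  proof (rule eventually_mono[OF ev])
    fix t assume "\<exists>f. linear f \<and> inj f \<and> (\<forall>x y. C t x y = B (f x) (f y))"
    then obtain f where f: "linear f" "\<forall>x y. C t x y = B (f x) (f y)" by blast
    have "C t = (\<lambda>x y. B (f x) (f y))" using f(2) by (intro ext) simp
    thus "bilinear (C t) \<and> (\<forall>x y. C t x y = C t y x)"
      using bilinear_comp[OF bl f(1)] sym by simp
  qed
  have b0: "bilinear B0" "\<forall>x y. B0 x y = B0 y x"
    using limit_bilinear[OF F lim evb] by auto
  obtain P0 where P0: "diag_basis B0 P0" using diag_exists[OF b0] by blast
  obtain W0 where W0: "subspace W0" "dim W0 = rank_plus B0" "\<forall>v\<in>W0. v \<noteq> 0 \<longrightarrow> B0 v v > 0"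
    using pos_sub_exists[OF b0(1) P0] rank_plus_eq[OF b0(1) P0] by metis
  have evp: "eventually (\<lambda>t. \<forall>v\<in>W0. v \<noteq> 0 \<longrightarrow> C t v v > 0) F"
    by (rule eventually_posdef[OF b0(1) lim _ W0(1) W0(3)]) (use evb in \<open>rule eventually_mono\<close>, blast)
  from eventually_happens[OF eventually_conj[OF evp ev]] F
  obtain t f where t: "\<forall>v\<in>W0. v \<noteq> 0 \<longrightarrow> C t v v > 0" "linear f" "inj f" "\<forall>x y. C t x y = B (f x) (f y)"
    by blast
  have sub1: "subspace (f ` W0)" by (rule linear_subspace_image[OF t(2) W0(1)])
  have dim1: "dim (f ` W0) = dim W0"
    by (rule dim_image_eq[OF t(2)]) (use t(3) in \<open>auto simp: inj_on_def inj_def\<close>)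
  have pd1: "\<forall>w\<in>f ` W0. w \<noteq> 0 \<longrightarrow> B w w > 0"
  proof (intro ballI impI)
    fix w assume "w \<in> f ` W0" "w \<noteq> 0"
    then obtain v where v: "v \<in> W0" "w = f v" by blast
    have "v \<noteq> 0" using v \<open>w \<noteq> 0\<close> linear_0[OF t(2)] by auto
    thus "B w w > 0" using t(1) t(4) v by auto
  qed
  obtain P where P: "diag_basis B P" using diag_exists[OF bl sym] by blast
  show ?thesis
    using pos_le_card[OF bl P sub1 pd1] rank_plus_eq[OF bl P] dim1 W0(2) by simp
qed

lemma rank_minus_neg: "rank_minus B = rank_plus (\<lambda>x y. - B x y)"
  unfolding rank_minus_def rank_plus_def diag_basis_def by simp


lemma matrix_inv_both:
  fixes U :: "real^'n^'n"
  assumes "invertible U"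
  shows "U ** matrix_inv U = mat 1 \<and> matrix_inv U ** U = mat 1"
  using assms unfolding matrix_inv_def invertible_def by (rule someI_ex)

lemma ad_conj:
  fixes b :: "real^'n \<Rightarrow> real^'n \<Rightarrow> real^'n" and U :: "real^'n^'n"
  assumes bl: "bilinear b"
  shows "ad (\<lambda>x y. matrix_inv U *v b (U *v x) (U *v y)) u = matrix_inv U ** ad b (U *v u) ** U"
proof -
  have lb: "linear (b w)" for w
  proof -
    have "linear (\<lambda>y. b w y)" using bl by (simp add: bilinear_def)
    thus ?thesis by (simp add: eta_contract_eq)
  qed
  have e: "(\<lambda>y. matrix_inv U *v b (U *v u) (U *v y)) = ((\<lambda>z. matrix_inv U *v z) \<circ> b (U *v u)) \<circ> (\<lambda>y. U *v y)"
    by (simp add: o_def)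
  have "matrix (((\<lambda>z. matrix_inv U *v z) \<circ> b (U *v u)) \<circ> (\<lambda>y. U *v y))
      = matrix ((\<lambda>z. matrix_inv U *v z) \<circ> b (U *v u)) ** matrix (\<lambda>y. U *v y)"
    by (rule matrix_compose) (auto intro: linear_compose lb)
  also have "\<dots> = matrix_inv U ** matrix (b (U *v u)) ** U"
    by (subst matrix_compose) (auto intro: lb)
  finally show ?thesis unfolding ad_def e .
qed

lemma trace_conj:
  fixes U Ui A :: "real^'n^'n"
  assumes "U ** Ui = mat 1"
  shows "trace (Ui ** A ** U) = trace A"
proof -
  have "trace (Ui ** A ** U) = trace (U ** (Ui ** A))" by (rule trace_mul_sym)
  also have "\<dots> = trace A" by (simp add: matrix_mul_assoc assms)
  finally show ?thesis .
qed

lemma prod_conj: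
  fixes U Ui A B :: "real^'n^'n"
  assumes "U ** Ui = mat 1"
  shows "(Ui ** A ** U) ** (Ui ** B ** U) = Ui ** (A ** B) ** U"
proof -
  have h: "U ** (Ui ** X) = X" for X :: "real^'n^'n" by (simp add: matrix_mul_assoc assms)
  have "(Ui ** A ** U) ** (Ui ** B ** U) = Ui ** A ** (U ** (Ui ** (B ** U)))"
    by (simp add: matrix_mul_assoc)
  also have "\<dots> = Ui ** A ** ((U ** Ui) ** (B ** U))" by (simp only: matrix_mul_assoc)
  also have "\<dots> = Ui ** (A ** B) ** U" by (simp add: assms matrix_mul_assoc)
  finally show ?thesis .
qed

lemma killing_inv:
  fixes b :: "real^'n \<Rightarrow> real^'n \<Rightarrow> real^'n" and U :: "real^'n^'n"
  assumes bl: "bilinear b" and inv: "invertible U"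
  shows "killing (\<lambda>x y. matrix_inv U *v b (U *v x) (U *v y)) u v = killing b (U *v u) (U *v v)"
    and "mod_killing \<alpha> (\<lambda>x y. matrix_inv U *v b (U *v x) (U *v y)) u v = mod_killing \<alpha> b (U *v u) (U *v v)"
proof -
  have U: "U ** matrix_inv U = mat 1" using matrix_inv_both[OF inv] by blast
  show "killing (\<lambda>x y. matrix_inv U *v b (U *v x) (U *v y)) u v = killing b (U *v u) (U *v v)"
    unfolding killing_def ad_conj[OF bl] prod_conj[OF U] trace_conj[OF U] ..
  show "mod_killing \<alpha> (\<lambda>x y. matrix_inv U *v b (U *v x) (U *v y)) u v = mod_killing \<alpha> b (U *v u) (U *v v)"
    unfolding mod_killing_def ad_conj[OF bl] prod_conj[OF U] trace_conj[OF U] ..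
qed

lemma killing_expand:
  "killing b u v = (\<Sum>i\<in>UNIV. \<Sum>k\<in>UNIV. b u (axis k 1) $ i * b v (axis i 1) $ k)"
  unfolding killing_def ad_def trace_def matrix_def matrix_matrix_mult_def by simp

lemma trace_ad_expand:
  "trace (ad b u) = (\<Sum>i\<in>UNIV. b u (axis i 1) $ i)"
  unfolding ad_def trace_def matrix_def by simp

lemma mod_killing_alt:
  "mod_killing \<alpha> b u v = killing b u v + \<alpha> * trace (ad b u) * trace (ad b v)"
  unfolding mod_killing_def killing_def ..

lemma killing_sym: "killing b u v = killing b v u"
  unfolding killing_def by (rule trace_mul_sym)

lemma mod_killing_sym: "mod_killing \<alpha> b u v = mod_killing \<alpha> b v u"
  unfolding mod_killing_alt by (simp add: killing_sym[of b u v])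

lemma killing_bil:
  fixes b :: "real^'n \<Rightarrow> real^'n \<Rightarrow> real^'n"
  assumes bl: "bilinear b"
  shows "bilinear (killing b)" "bilinear (mod_killing \<alpha> b)"
proof -
  have lk: "linear (\<lambda>u. killing b u v)" for v
    unfolding linear_iff killing_expand
    by (simp add: bilinear_ladd[OF bl] bilinear_lmul[OF bl] distrib_right sum.distrib sum_distrib_left mult.assoc)
  have lt: "linear (\<lambda>u. trace (ad b u))"
    unfolding linear_iff trace_ad_expand
    by (simp add: bilinear_ladd[OF bl] bilinear_lmul[OF bl] sum.distrib sum_distrib_left)
  have lm: "linear (\<lambda>u. mod_killing \<alpha> b u v)" for v
    using lk[of v] lt unfolding linear_iff mod_killing_alt by (simp add: algebra_simps)
  show "bilinear (killing b)"
    unfolding bilinear_def using lk killing_sym[of b] by (simp add: eta_contract_eq; metis)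
  show "bilinear (mod_killing \<alpha> b)"
    unfolding bilinear_def using lm mod_killing_sym[of \<alpha> b] by (simp add: eta_contract_eq; metis)
qed


lemma contraction_main:
  fixes b b0 :: "real^'n \<Rightarrow> real^'n \<Rightarrow> real^'n" and U :: "'t \<Rightarrow> real^'n^'n"
  assumes F: "F \<noteq> bot" and bl: "bilinear b"
    and evi: "eventually (\<lambda>t. invertible (U t)) F"
    and lim: "\<forall>x y. ((\<lambda>t. matrix_inv (U t) *v b (U t *v x) (U t *v y)) \<longlongrightarrow> b0 x y) F"
  shows "rank_plus (killing b0) \<le> rank_plus (killing b)
    \<and> rank_minus (killing b0) \<le> rank_minus (killing b)
    \<and> (\<forall>\<alpha>::real. rank_plus (mod_killing \<alpha> b0) \<le> rank_plus (mod_killing \<alpha> b)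
        \<and> rank_minus (mod_killing \<alpha> b0) \<le> rank_minus (mod_killing \<alpha> b))"
proof -
  define bt where "bt t = (\<lambda>x y. matrix_inv (U t) *v b (U t *v x) (U t *v y))" for t
  have L: "\<And>x y. ((\<lambda>t. bt t x y) \<longlongrightarrow> b0 x y) F" using lim by (simp add: bt_def)
  have Lk: "((\<lambda>t. killing (bt t) u v) \<longlongrightarrow> killing b0 u v) F" for u v
    unfolding killing_expand by (intro tendsto_intros L)
  have Lt: "((\<lambda>t. trace (ad (bt t) u)) \<longlongrightarrow> trace (ad b0 u)) F" for u
    unfolding trace_ad_expand by (intro tendsto_intros L)
  have Lm: "((\<lambda>t. mod_killing \<alpha> (bt t) u v) \<longlongrightarrow> mod_killing \<alpha> b0 u v) F" for \<alpha> u v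
    unfolding mod_killing_alt by (intro tendsto_intros Lk Lt)
  have ev: "eventually (\<lambda>t. \<exists>f. linear f \<and> inj f \<and> (\<forall>x y. killing (bt t) x y = killing b (f x) (f y))
      \<and> (\<forall>\<alpha> x y. mod_killing \<alpha> (bt t) x y = mod_killing \<alpha> b (f x) (f y))) F"
  proof (rule eventually_mono[OF evi])
    fix t assume inv: "invertible (U t)"
    show "\<exists>f. linear f \<and> inj f \<and> (\<forall>x y. killing (bt t) x y = killing b (f x) (f y))
      \<and> (\<forall>\<alpha> x y. mod_killing \<alpha> (bt t) x y = mod_killing \<alpha> b (f x) (f y))"
      by (rule exI[of _ "\<lambda>x. U t *v x"])
        (simp add: bt_def killing_inv[OF bl inv] inj_matrix_vector_mult[OF inv, unfolded eta_contract_eq])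
  qed
  have kb: "bilinear (killing b)" "bilinear (mod_killing \<alpha> b)" for \<alpha>
    using killing_bil[OF bl] by auto
  have r1: "rank_plus (killing b0) \<le> rank_plus (killing b)"
    by (rule rank_plus_limit[OF F kb(1), where C="\<lambda>t. killing (bt t)"])
      (use killing_sym Lk in blast, use Lk in blast, rule eventually_mono[OF ev], blast)
  have r2: "rank_minus (killing b0) \<le> rank_minus (killing b)"
  proof -
    have s1: "\<forall>x y. - killing b x y = - killing b y x" using killing_sym by metis
    have s2: "\<forall>x y. ((\<lambda>t. - killing (bt t) x y) \<longlongrightarrow> - killing b0 x y) F"
      using Lk by (intro allI tendsto_minus) 
    have s3: "eventually (\<lambda>t. \<exists>f. linear f \<and> inj f \<and> (\<forall>x y. - killing (bt t) x y = - killing b (f x) (f y))) F"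
      by (rule eventually_mono[OF ev]) auto
    show ?thesis unfolding rank_minus_neg
      by (rule rank_plus_limit[OF F bilinear_neg[OF kb(1)] s1 s2 s3])
  qed
  have r3: "rank_plus (mod_killing \<alpha> b0) \<le> rank_plus (mod_killing \<alpha> b)" for \<alpha>
    by (rule rank_plus_limit[OF F kb(2), where C="\<lambda>t. mod_killing \<alpha> (bt t)"])
      (use mod_killing_sym in blast, use Lm in blast, rule eventually_mono[OF ev], blast)
  have r4: "rank_minus (mod_killing \<alpha> b0) \<le> rank_minus (mod_killing \<alpha> b)" for \<alpha>
  proof -
    have s1: "\<forall>x y. - mod_killing \<alpha> b x y = - mod_killing \<alpha> b y x" using mod_killing_sym by metis
    have s2: "\<forall>x y. ((\<lambda>t. - mod_killing \<alpha> (bt t) x y) \<longlongrightarrow> - mod_killing \<alpha> b0 x y) F"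
      using Lm by (intro allI tendsto_minus) 
    have s3: "eventually (\<lambda>t. \<exists>f. linear f \<and> inj f \<and> (\<forall>x y. - mod_killing \<alpha> (bt t) x y = - mod_killing \<alpha> b (f x) (f y))) F"
      by (rule eventually_mono[OF ev]) auto
    show ?thesis unfolding rank_minus_neg
      by (rule rank_plus_limit[OF F bilinear_neg[OF kb(2)] s1 s2 s3])
  qed
  show ?thesis using r1 r2 r3 r4 by blast
qed

theorem theorem1:
  fixes b b0 :: "real^'n \<Rightarrow> real^'n \<Rightarrow> real^'n"
  assumes "lie_bracket b"
    and "continuous_contraction b b0 \<or> sequential_contraction b b0"
    and "\<not> lie_isomorphic b0 b"
  shows "rank_plus (killing b0) \<le> rank_plus (killing b)
    \<and> rank_minus (killing b0) \<le> rank_minus (killing b)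
    \<and> (\<forall>\<alpha>::real. rank_plus (mod_killing \<alpha> b0) \<le> rank_plus (mod_killing \<alpha> b)
        \<and> rank_minus (mod_killing \<alpha> b0) \<le> rank_minus (mod_killing \<alpha> b))"
proof -
  have bl: "bilinear b" using assms(1) by (simp add: lie_bracket_def)
  show ?thesis using assms(2)
  proof
    assume "continuous_contraction b b0"
    then obtain U :: "real \<Rightarrow> real^'n^'n" where U: "\<forall>\<epsilon>\<in>{0<..1}. invertible (U \<epsilon>)"
      "\<forall>x y. ((\<lambda>\<epsilon>. matrix_inv (U \<epsilon>) *v b (U \<epsilon> *v x) (U \<epsilon> *v y)) \<longlongrightarrow> b0 x y) (at_right 0)"
      unfolding continuous_contraction_def by blast
    have "eventually (\<lambda>\<epsilon>. invertible (U \<epsilon>)) (at_right (0::real))"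
      unfolding eventually_at_right_field using U(1)
      by (intro exI[of _ 1]) auto
    thus ?thesis using contraction_main[OF _ bl _ U(2)] by simp
  next
    assume "sequential_contraction b b0"
    then obtain U :: "nat \<Rightarrow> real^'n^'n" where U: "\<forall>p. invertible (U p)"
      "\<forall>x y. (\<lambda>p. matrix_inv (U p) *v b (U p *v x) (U p *v y)) \<longlonglongrightarrow> b0 x y"
      unfolding sequential_contraction_def by blast
    show ?thesis using contraction_main[OF _ bl _ U(2)] U(1) by simp
  qed
qed


end
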